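(* Let $\gamma<1$ and assume that the right end point of the support of $\mu$ is $b=\frac{1}{1-\gamma}$. Let $a$ be the left end point of the support of $\mu$. Then, for each $x_0>0$, $$\lim_{t\uparrow\infty}\frac{r(x_0,t)}{x_0}=a.$$ Furthermore, with $\Delta(x_0,t):=\frac{h^{(-1)}(x_0,t)}{t}-\frac a2$, define $$G(x_0,t):=\begin{cases}\displaystyle\int_{[a,\frac{1}{1-\gamma}]}(y-a)\,e^{-ty\frac{y-a}{2}}\,\mu(dy), & \Delta(x_0,t)<0,\\[2ex] \displaystyle 2\Delta(x_0,t)\,x_0+\int_{[a+2\Delta(x_0,t),\frac{1}{1-\gamma}]}(y-a)\,e^{ty\frac{2\Delta(x_0,t)+a-y}{2}}\,\mu(dy), & \Delta(x_0,t)>0.\end{cases}$$ Then $\lim_{t\uparrow\infty}G(x_0,t)=0$, and for $t$ large enough, $$0\le r(x_0,t)-a x_0\le G(x_0,t).$$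
   Context: Let $\mu$ be a nonzero finite positive Borel measure on $(0,\infty)$ such that $\int y e^{yz}\mu(dy)<\infty$ for every $z\in\mathbb{R}$. Let $a:=\inf\{y\ge 0:\mu((0,y])>0\}$ and $b:=\inf\{y>0:\mu((y,\infty))=0\}$ denote the end points of its support. Define $h(z,t):=\int e^{yz-\frac12 y^2 t}\mu(dy)$ for $(z,t)\in\mathbb{R}\times[0,\infty)$. For each $t$, the map $z\mapsto h(z,t)$ is smooth and strictly increasing with range $(0,\infty)$, and $h_t+\frac12 h_{zz}=0$. $h^{(-1)}(x,t)$ denotes its inverse in $z$. Let $u:(0,\infty)\times[0,\infty)\to\mathbb{R}$ be smooth, strictly increasing and strictly concave in $x$, solving $u_t=\frac12 u_x^2/u_{xx}$, and related to $h$ by $u_x(h(z,t),t)=e^{-z+t/2}$ for all $(z,t)$. The risk tolerance function is $r(x,t):=-u_x(x,t)/u_{xx}(x,t)$. Equivalently, $$r(x,t)=h_z(h^{(-1)}(x,t),t)=\int y\,e^{y h^{(-1)}(x,t)-\frac12 y^2 t}\mu(dy).$$ *)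

theory Defs
  imports "HOL-Analysis.Analysis"
begin

definition supp_left :: "real measure \<Rightarrow> real" where
  "supp_left \<mu> = Inf {y. 0 \<le> y \<and> measure \<mu> {0<..y} > 0}"

text \<open>Right end point of the support of mu, as an extended real (infinity if the
  support is unbounded): inf of y > 0 with mu((y,infinity)) = 0.\<close>
definition supp_right :: "real measure \<Rightarrow> ereal" where
  "supp_right \<mu> = Inf {ereal y | y. 0 < y \<and> emeasure \<mu> {y<..} = 0}"

definition hfun :: "real measure \<Rightarrow> real \<Rightarrow> real \<Rightarrow> real" where
  "hfun \<mu> z t = (\<integral>y. exp (y * z - y\<^sup>2 * t / 2) \<partial>\<mu>)"

definition hinv :: "real measure \<Rightarrow> real \<Rightarrow> real \<Rightarrow> real" where
  "hinv \<mu> x t = (THE z. hfun \<mu> z t = x)"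

text \<open>Risk tolerance r(x,t) = h_z(h^{-1}(x,t),t).\<close>
definition risk_tol :: "real measure \<Rightarrow> real \<Rightarrow> real \<Rightarrow> real" where
  "risk_tol \<mu> x t = (\<integral>y. y * exp (y * hinv \<mu> x t - y\<^sup>2 * t / 2) \<partial>\<mu>)"

definition Delta :: "real measure \<Rightarrow> real \<Rightarrow> real \<Rightarrow> real" where
  "Delta \<mu> x0 t = hinv \<mu> x0 t / t - supp_left \<mu> / 2"

text \<open>G(x0,t); the two cases of the paper coincide when Delta = 0.\<close>
definition Gfun :: "real measure \<Rightarrow> real \<Rightarrow> real \<Rightarrow> real \<Rightarrow> real" where
  "Gfun \<mu> \<gamma> x0 t =
    (let a = supp_left \<mu>; D = Delta \<mu> x0 t in
     if D \<le> 0 then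
       (\<integral>y\<in>{a..1/(1-\<gamma>)}. (y - a) * exp (- t * y * (y - a) / 2) \<partial>\<mu>)
     else
       2 * D * x0 + (\<integral>y\<in>{a + 2*D..1/(1-\<gamma>)}. (y - a) * exp (t * y * (2*D + a - y) / 2) \<partial>\<mu>))"

end

theory Submission imports Defs "HOL-Real_Asymp.Real_Asymp" begin

locale S =
  fixes \<mu> :: "real measure" and a b :: real
  assumes sets_mu: "sets \<mu> = sets borel"
  and fin: "finite_measure \<mu>"
  and AEab: "AE y in \<mu>. 0 < y \<and> a \<le> y \<and> y \<le> b"
  and a0: "0 \<le> a"
  and nz: "emeasure \<mu> (space \<mu>) \<noteq> 0"
  and mass: "\<And>\<delta>. \<delta> > 0 \<Longrightarrow> \<exists>\<eta>>0. measure \<mu> {\<eta>..a+\<delta>} > 0"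
begin

interpretation finite_measure \<mu> by (rule fin)

lemma AE_False: "(AE x in \<mu>. False) \<longleftrightarrow> emeasure \<mu> (space \<mu>) = 0"
  using ae_filter_eq_bot_iff[of \<mu>] trivial_limit_def by metis

lemma bm: "borel_measurable \<mu> = borel_measurable borel"
  by (rule measurable_cong_sets[OF sets_mu refl])

lemma sets_in[simp]: "A \<in> sets borel \<Longrightarrow> A \<in> sets \<mu>" using sets_mu by simp

lemma intb:
  fixes f :: "real \<Rightarrow> real"
  assumes "f \<in> borel_measurable borel" "AE y in \<mu>. 0 < y \<and> a \<le> y \<and> y \<le> b \<longrightarrow> \<bar>f y\<bar> \<le> B"
  shows "integrable \<mu> f"
proof (rule integrable_const_bound[where B=B])
  show "AE y in \<mu>. norm (f y) \<le> B" using assms(2) AEab by eventually_elim auto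
  show "f \<in> borel_measurable \<mu>" unfolding bm using assms(1) .
qed

lemma ab: "a \<le> b"
proof -
  have "AE y in \<mu>. a \<le> b" using AEab by eventually_elim auto
  then show ?thesis using nz by (cases "a \<le> b") (auto simp: AE_False)
qed

lemma b0: "0 < b"
proof -
  have "AE y in \<mu>. 0 < b" using AEab by eventually_elim auto
  then show ?thesis using nz by (cases "0 < b") (auto simp: AE_False)
qed

lemma h_int: "integrable \<mu> (\<lambda>y. exp (y * z - y\<^sup>2 * t / 2))"
proof (rule intb[where B="exp (b * \<bar>z\<bar> + b\<^sup>2 * \<bar>t\<bar>)"])
  show "(\<lambda>y. exp (y * z - y\<^sup>2 * t / 2)) \<in> borel_measurable borel" by measurable
  show "AE y in \<mu>. 0 < y \<and> a \<le> y \<and> y \<le> b \<longrightarrow> \<bar>exp (y * z - y\<^sup>2 * t / 2)\<bar> \<le> exp (b * \<bar>z\<bar> + b\<^sup>2 * \<bar>t\<bar>)"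
  proof (rule AE_I2, safe)
    fix y assume y: "0 < y" "a \<le> y" "y \<le> b"
    have "y * z \<le> b * \<bar>z\<bar>" using y
      by (metis abs_ge_self abs_mult abs_of_pos dual_order.trans mult_right_mono abs_ge_zero)
    moreover have "- (y\<^sup>2 * t / 2) \<le> b\<^sup>2 * \<bar>t\<bar>"
    proof -
      have "y\<^sup>2 \<le> b\<^sup>2" using y by (simp add: power_mono)
      then have "\<bar>y\<^sup>2 * t\<bar> \<le> b\<^sup>2 * \<bar>t\<bar>" by (simp add: abs_mult mult_right_mono)
      then show ?thesis by linarith
    qed
    ultimately show "\<bar>exp (y * z - y\<^sup>2 * t / 2)\<bar> \<le> exp (b * \<bar>z\<bar> + b\<^sup>2 * \<bar>t\<bar>)" by simp
  qed
qed

lemma hy_int: "integrable \<mu> (\<lambda>y. y * exp (y * z - y\<^sup>2 * t / 2))"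
proof (rule intb[where B="b * exp (b * \<bar>z\<bar> + b\<^sup>2 * \<bar>t\<bar>)"])
  show "(\<lambda>y. y * exp (y * z - y\<^sup>2 * t / 2)) \<in> borel_measurable borel" by measurable
  show "AE y in \<mu>. 0 < y \<and> a \<le> y \<and> y \<le> b \<longrightarrow> \<bar>y * exp (y * z - y\<^sup>2 * t / 2)\<bar> \<le> b * exp (b * \<bar>z\<bar> + b\<^sup>2 * \<bar>t\<bar>)"
  proof (rule AE_I2, safe)
    fix y assume y: "0 < y" "a \<le> y" "y \<le> b"
    have "y * z \<le> b * \<bar>z\<bar>" using y
      by (metis abs_ge_self abs_mult abs_of_pos dual_order.trans mult_right_mono abs_ge_zero)
    moreover have "- (y\<^sup>2 * t / 2) \<le> b\<^sup>2 * \<bar>t\<bar>"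
    proof -
      have "y\<^sup>2 \<le> b\<^sup>2" using y by (simp add: power_mono)
      then have "\<bar>y\<^sup>2 * t\<bar> \<le> b\<^sup>2 * \<bar>t\<bar>" by (simp add: abs_mult mult_right_mono)
      then show ?thesis by linarith
    qed
    ultimately have "exp (y * z - y\<^sup>2 * t / 2) \<le> exp (b * \<bar>z\<bar> + b\<^sup>2 * \<bar>t\<bar>)" by simp
    then show "\<bar>y * exp (y * z - y\<^sup>2 * t / 2)\<bar> \<le> b * exp (b * \<bar>z\<bar> + b\<^sup>2 * \<bar>t\<bar>)"
      using y by (simp add: abs_mult mult_mono)
  qed
qed

lemma h_mono: assumes "z < z'" shows "hfun \<mu> z t < hfun \<mu> z' t"
  unfolding hfun_def
proof (rule integral_less_AE_space[OF h_int h_int _ nz])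
  show "AE y in \<mu>. exp (y * z - y\<^sup>2 * t / 2) < exp (y * z' - y\<^sup>2 * t / 2)"
    using AEab by eventually_elim (use assms in auto)
qed

lemma exp_lip: fixes u v :: real shows "\<bar>exp u - exp v\<bar> \<le> exp (max u v) * \<bar>u - v\<bar>"
proof -
  have *: "exp u - exp v \<le> exp u * (u - v)" for u v :: real
  proof -
    have "1 + (v - u) \<le> exp (v - u)" by (rule exp_ge_add_one_self)
    then have "exp u * (1 + (v - u)) \<le> exp u * exp (v - u)" by simp
    then show ?thesis by (simp add: algebra_simps exp_diff)
  qed
  show ?thesis
  proof (cases "v \<le> u")
    case True
    have "exp v \<le> exp u" using True by simp
    then show ?thesis using *[of u v] True by (simp add: max_def)
  next
    case False
    have "exp u \<le> exp v" using False by simp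
    then show ?thesis using *[of v u] False by (simp add: max_def abs_minus_commute)
  qed
qed

lemma space_mu: "space \<mu> = UNIV" using sets_eq_imp_space_eq[OF sets_mu] by simp

lemma h_lip:
  assumes t: "0 \<le> t" and R: "0 \<le> R"
  shows "(measure \<mu> (space \<mu>) * (exp (b * R) * b))-lipschitz_on {-R..R} (\<lambda>z. hfun \<mu> z t)"
proof (rule lipschitz_onI)
  show "0 \<le> measure \<mu> (space \<mu>) * (exp (b * R) * b)" using b0 by simp
  fix z z' assume z: "z \<in> {-R..R}" "z' \<in> {-R..R}"
  let ?C = "exp (b * R) * b * \<bar>z - z'\<bar>"
  have "\<bar>hfun \<mu> z t - hfun \<mu> z' t\<bar> = \<bar>\<integral>y. exp (y * z - y\<^sup>2 * t / 2) - exp (y * z' - y\<^sup>2 * t / 2) \<partial>\<mu>\<bar>"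
    unfolding hfun_def by (simp add: Bochner_Integration.integral_diff[OF h_int h_int])
  also have "\<dots> \<le> (\<integral>y. \<bar>exp (y * z - y\<^sup>2 * t / 2) - exp (y * z' - y\<^sup>2 * t / 2)\<bar> \<partial>\<mu>)"
    using integral_norm_bound[of \<mu> "\<lambda>y. exp (y * z - y\<^sup>2 * t / 2) - exp (y * z' - y\<^sup>2 * t / 2)"]
    using Bochner_Integration.integrable_diff[OF h_int h_int] by (simp del: Bochner_Integration.integral_diff)
  also have "\<dots> \<le> (\<integral>y. ?C \<partial>\<mu>)"
  proof (rule integral_mono_AE)
    show "integrable \<mu> (\<lambda>y. \<bar>exp (y * z - y\<^sup>2 * t / 2) - exp (y * z' - y\<^sup>2 * t / 2)\<bar>)"
      by (intro integrable_abs Bochner_Integration.integrable_diff h_int)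
    show "integrable \<mu> (\<lambda>y. ?C)" by simp
    show "AE y in \<mu>. \<bar>exp (y * z - y\<^sup>2 * t / 2) - exp (y * z' - y\<^sup>2 * t / 2)\<bar> \<le> ?C"
      using AEab
    proof eventually_elim
      case (elim y)
      have m: "max (y * z - y\<^sup>2 * t / 2) (y * z' - y\<^sup>2 * t / 2) \<le> b * R"
      proof -
        have yzR: "y * w \<le> b * R" if "\<bar>w\<bar> \<le> R" for w
        proof -
          have "y * w \<le> y * \<bar>w\<bar>" using elim by (simp add: mult_left_mono)
          also have "\<dots> \<le> b * R" using elim that by (intro mult_mono) auto
          finally show ?thesis .
        qed
        have "y * z \<le> b * R" "y * z' \<le> b * R" using z by (auto intro!: yzR)
        moreover have "0 \<le> y\<^sup>2 * t / 2" using t by simp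
        ultimately show ?thesis by simp
      qed
      have d: "\<bar>(y * z - y\<^sup>2 * t / 2) - (y * z' - y\<^sup>2 * t / 2)\<bar> \<le> b * \<bar>z - z'\<bar>"
      proof -
        have "\<bar>(y * z - y\<^sup>2 * t / 2) - (y * z' - y\<^sup>2 * t / 2)\<bar> = y * \<bar>z - z'\<bar>"
          using elim by (simp add: right_diff_distrib[symmetric] abs_mult)
        also have "\<dots> \<le> b * \<bar>z - z'\<bar>" using elim by (simp add: mult_right_mono)
        finally show ?thesis .
      qed
      have "\<bar>exp (y * z - y\<^sup>2 * t / 2) - exp (y * z' - y\<^sup>2 * t / 2)\<bar>
          \<le> exp (max (y * z - y\<^sup>2 * t / 2) (y * z' - y\<^sup>2 * t / 2)) * \<bar>(y * z - y\<^sup>2 * t / 2) - (y * z' - y\<^sup>2 * t / 2)\<bar>"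
        by (rule exp_lip)
      also have "\<dots> \<le> exp (b * R) * (b * \<bar>z - z'\<bar>)"
        by (rule mult_mono) (use m d in auto)
      finally show ?case by simp
    qed
  qed
  also have "\<dots> = measure \<mu> (space \<mu>) * (exp (b * R) * b) * dist z z'"
    by (simp add: dist_real_def)
  finally show "dist (hfun \<mu> z t) (hfun \<mu> z' t) \<le> measure \<mu> (space \<mu>) * (exp (b * R) * b) * dist z z'"
    by (simp add: dist_real_def)
qed

lemma h_cont: assumes "0 \<le> t" shows "continuous_on {c..d} (\<lambda>z. hfun \<mu> z t)"
proof -
  let ?R = "max \<bar>c\<bar> \<bar>d\<bar>"
  have "continuous_on {-?R..?R} (\<lambda>z. hfun \<mu> z t)"
    by (rule lipschitz_on_continuous_on[OF h_lip[OF assms]]) simp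
  then show ?thesis by (rule continuous_on_subset) auto
qed

lemma h_lower:
  assumes "\<forall>y\<in>{\<eta>..B}. K \<le> y * z - y\<^sup>2 * t / 2"
  shows "measure \<mu> {\<eta>..B} * exp K \<le> hfun \<mu> z t"
proof -
  have "measure \<mu> {\<eta>..B} * exp K = (\<integral>y. indicator {\<eta>..B} y * exp K \<partial>\<mu>)"
    by (simp add: space_mu)
  also have "\<dots> \<le> hfun \<mu> z t" unfolding hfun_def
  proof (rule integral_mono)
    show "integrable \<mu> (\<lambda>y. indicator {\<eta>..B} y * exp K)"
      by (rule intb[where B="exp K"]) (auto split: split_indicator)
    show "integrable \<mu> (\<lambda>y. exp (y * z - y\<^sup>2 * t / 2))" by (rule h_int)
    fix y show "indicator {\<eta>..B} y * exp K \<le> exp (y * z - y\<^sup>2 * t / 2)"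
      using assms by (auto split: split_indicator)
  qed
  finally show ?thesis .
qed

lemma ex_small: assumes "0 \<le> t" "0 < x" shows "\<exists>z. hfun \<mu> z t < x"
proof -
  have "((\<lambda>s. \<integral>y. exp (y * (-s) - y\<^sup>2 * t / 2) \<partial>\<mu>) \<longlongrightarrow> (\<integral>y. 0 \<partial>\<mu>)) at_top"
  proof (rule integral_dominated_convergence_at_top[where w="\<lambda>y. 1"])
    show "(\<lambda>y. 0::real) \<in> borel_measurable \<mu>" by simp
    show "(\<lambda>y. exp (y * (-s) - y\<^sup>2 * t / 2)) \<in> borel_measurable \<mu>" for s
      unfolding bm by measurable
    show "integrable \<mu> (\<lambda>y. 1::real)" by simp
    show "AE y in \<mu>. ((\<lambda>s. exp (y * (-s) - y\<^sup>2 * t / 2)) \<longlongrightarrow> 0) at_top"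
      using AEab
    proof eventually_elim
      case (elim y)
      then have "y > 0" by simp
      then show ?case by real_asymp
    qed
    show "\<forall>\<^sub>F s in at_top. AE y in \<mu>. norm (exp (y * (-s) - y\<^sup>2 * t / 2)) \<le> 1"
      using eventually_ge_at_top[of 0]
    proof eventually_elim
      case (elim s)
      show ?case using AEab
      proof eventually_elim
        case (elim y)
        have "0 \<le> y * s" "0 \<le> y\<^sup>2 * t" using elim \<open>0 \<le> s\<close> assms(1) by simp_all
        then have "y * (-s) - y\<^sup>2 * t / 2 \<le> 0" by simp
        then show ?case by simp
      qed
    qed
  qed
  then have "\<forall>\<^sub>F s in at_top. (\<integral>y. exp (y * (-s) - y\<^sup>2 * t / 2) \<partial>\<mu>) < x"
    using assms(2) by (auto dest: order_tendstoD)
  then obtain s where "(\<integral>y. exp (y * (-s) - y\<^sup>2 * t / 2) \<partial>\<mu>) < x"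
    using eventually_happens' by fastforce
  then show ?thesis unfolding hfun_def by blast
qed

lemma ex_large: assumes t: "0 \<le> t" and x: "0 < x" shows "\<exists>z. x < hfun \<mu> z t"
proof -
  obtain \<eta> where \<eta>: "\<eta> > 0" and c: "measure \<mu> {\<eta>..a+1} > 0" using mass[of 1] by auto
  define c where "c = measure \<mu> {\<eta>..a+1}"
  define B where "B = a + 1"
  define z where "z = max 0 ((ln (x / c) + B\<^sup>2 * t / 2 + 1) / \<eta>)"
  define K where "K = \<eta> * z - B\<^sup>2 * t / 2"
  have z0: "0 \<le> z" unfolding z_def by simp
  have "\<eta> * ((ln (x / c) + B\<^sup>2 * t / 2 + 1) / \<eta>) \<le> \<eta> * z"
    unfolding z_def using \<eta> by (intro mult_left_mono) auto
  then have "ln (x / c) + 1 \<le> K" unfolding K_def using \<eta> by simp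
  then have "ln (x / c) < K" by simp
  then have "x / c < exp K" using x c c_def by (metis divide_pos_pos exp_less_cancel_iff exp_ln)
  then have "x < c * exp K" using c c_def by (simp add: field_simps)
  also have "c * exp K \<le> hfun \<mu> z t" unfolding c_def
  proof (rule h_lower, intro ballI)
    fix y assume y: "y \<in> {\<eta>..a+1}"
    have "\<eta> * z \<le> y * z" using y z0 by (intro mult_right_mono) auto
    moreover have "y\<^sup>2 \<le> B\<^sup>2" using y \<eta> unfolding B_def by (intro power_mono) auto
    then have "y\<^sup>2 * t \<le> B\<^sup>2 * t" using t by (rule mult_right_mono)
    ultimately show "K \<le> y * z - y\<^sup>2 * t / 2" unfolding K_def by simp
  qed
  finally show ?thesis by blast
qed

lemma hinv: assumes t: "0 \<le> t" and x: "0 < x" shows "hfun \<mu> (hinv \<mu> x t) t = x"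
proof -
  obtain z1 where z1: "hfun \<mu> z1 t < x" using ex_small[OF t x] by blast
  obtain z2 where z2: "x < hfun \<mu> z2 t" using ex_large[OF t x] by blast
  have "z1 \<le> z2"
  proof (rule ccontr)
    assume "\<not> z1 \<le> z2" then have "hfun \<mu> z2 t < hfun \<mu> z1 t" by (intro h_mono) simp
    then show False using z1 z2 by simp
  qed
  then obtain z where z: "hfun \<mu> z t = x"
    using IVT'[of "\<lambda>z. hfun \<mu> z t" z1 x z2] z1 z2 h_cont[OF t] by force
  have uniq: "z' = z" if "hfun \<mu> z' t = x" for z'
  proof (rule ccontr)
    assume "z' \<noteq> z"
    then consider "z' < z" | "z < z'" by linarith
    then show False using h_mono[of z' z t] h_mono[of z z' t] that z by cases auto
  qed
  have "hinv \<mu> x t = z" unfolding hinv_def using z uniq by (rule the_equality)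
  then show ?thesis using z by simp
qed

lemma J_int: "integrable \<mu> (\<lambda>y. (y - a) * exp (- t * y * (y - a) / c))" if "0 \<le> t" "0 < c" for t c
proof (rule intb[where B="b - a"])
  show "(\<lambda>y. (y - a) * exp (- t * y * (y - a) / c)) \<in> borel_measurable borel" by measurable
  show "AE y in \<mu>. 0 < y \<and> a \<le> y \<and> y \<le> b \<longrightarrow> \<bar>(y - a) * exp (- t * y * (y - a) / c)\<bar> \<le> b - a"
  proof (rule AE_I2, safe)
    fix y assume y: "0 < y" "a \<le> y" "y \<le> b"
    have "0 \<le> t * y * (y - a) / c" using y that by simp
    then have "exp (- t * y * (y - a) / c) \<le> 1" by simp
    then have "(y - a) * exp (- t * y * (y - a) / c) \<le> (y - a) * 1" using y by (intro mult_left_mono) auto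
    then show "\<bar>(y - a) * exp (- t * y * (y - a) / c)\<bar> \<le> b - a" using y by simp
  qed
qed

lemma key_bounds:
  assumes t: "0 < t" and x: "0 < x" and sa: "supp_left \<mu> = a" and bg: "1 / (1 - \<gamma>) = b"
  shows "0 \<le> risk_tol \<mu> x t - a * x \<and> risk_tol \<mu> x t - a * x \<le> Gfun \<mu> \<gamma> x t
     \<and> Gfun \<mu> \<gamma> x t \<le> max (Delta \<mu> x t) 0 * (2 * x + 4 * measure \<mu> (space \<mu>))
          + (\<integral>y. (y - a) * exp (- t * y * (y - a) / 4) \<partial>\<mu>)"
proof -
  define z where "z = hinv \<mu> x t"
  define D where "D = Delta \<mu> x t"
  define M where "M = measure \<mu> (space \<mu>)"
  define J where "J = (\<integral>y. (y - a) * exp (- t * y * (y - a) / 4) \<partial>\<mu>)"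
  have D: "D = z / t - a / 2" unfolding D_def Delta_def z_def sa ..
  have eqE: "y * z - y\<^sup>2 * t / 2 = t * y * (2 * D + a - y) / 2" for y
    using t unfolding D by (simp add: field_simps power2_eq_square)
  have hx: "(\<integral>y. exp (t * y * (2 * D + a - y) / 2) \<partial>\<mu>) = x"
    using hinv[of t x] t x unfolding hfun_def z_def[symmetric] eqE by simp
  have eint: "integrable \<mu> (\<lambda>y. exp (t * y * (2 * D + a - y) / 2))"
    using h_int[of z t] unfolding eqE .
  have fint: "integrable \<mu> (\<lambda>y. (y - a) * exp (t * y * (2 * D + a - y) / 2))"
  proof -
    have "integrable \<mu> (\<lambda>y. y * exp (y * z - y\<^sup>2 * t / 2) - a * exp (y * z - y\<^sup>2 * t / 2))"
      by (intro Bochner_Integration.integrable_diff hy_int integrable_mult_right h_int)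
    then show ?thesis unfolding eqE by (simp add: left_diff_distrib)
  qed
  have Jint: "integrable \<mu> (\<lambda>y. (y - a) * exp (- t * y * (y - a) / 4))" using J_int t by simp
  have r: "risk_tol \<mu> x t - a * x = (\<integral>y. (y - a) * exp (t * y * (2 * D + a - y) / 2) \<partial>\<mu>)"
  proof -
    have "risk_tol \<mu> x t = (\<integral>y. y * exp (t * y * (2 * D + a - y) / 2) \<partial>\<mu>)"
      unfolding risk_tol_def z_def[symmetric] eqE ..
    moreover have "a * x = (\<integral>y. a * exp (t * y * (2 * D + a - y) / 2) \<partial>\<mu>)"
      using hx by simp
    moreover have "integrable \<mu> (\<lambda>y. y * exp (t * y * (2 * D + a - y) / 2))"
      using hy_int[of z t] unfolding eqE .
    ultimately show ?thesis using eint
      by (simp add: Bochner_Integration.integral_diff[symmetric] left_diff_distrib)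
  qed
  have nonneg: "0 \<le> risk_tol \<mu> x t - a * x"
    unfolding r by (rule integral_nonneg_AE) (use AEab in \<open>eventually_elim, auto\<close>)
  show ?thesis
  proof (cases "D \<le> 0")
    case True
    have G: "Gfun \<mu> \<gamma> x t = (\<integral>y. indicator {a..b} y * ((y - a) * exp (- t * y * (y - a) / 2)) \<partial>\<mu>)"
      unfolding Gfun_def Let_def D_def[symmetric] sa bg using True by (simp add: set_lebesgue_integral_def)
    have Gint: "integrable \<mu> (\<lambda>y. indicator {a..b} y * ((y - a) * exp (- t * y * (y - a) / 2)))"
      using integrable_mult_indicator[of "{a..b}" \<mu>, OF _ J_int[of t 2]] t by simp
    have "risk_tol \<mu> x t - a * x \<le> Gfun \<mu> \<gamma> x t"
      unfolding r G
    proof (rule integral_mono_AE[OF fint Gint])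
      show "AE y in \<mu>. (y - a) * exp (t * y * (2 * D + a - y) / 2) \<le> indicator {a..b} y * ((y - a) * exp (- t * y * (y - a) / 2))"
        using AEab
      proof eventually_elim
        case (elim y)
        have "t * y * D \<le> 0" using elim t True by (simp add: mult_nonneg_nonpos)
        moreover have "t * y * (2 * D + a - y) / 2 = - t * y * (y - a) / 2 + t * y * D" by (simp add: field_simps)
        ultimately have "t * y * (2 * D + a - y) / 2 \<le> - t * y * (y - a) / 2" by linarith
        then have "(y - a) * exp (t * y * (2 * D + a - y) / 2) \<le> (y - a) * exp (- t * y * (y - a) / 2)"
          using elim by (intro mult_left_mono) auto
        then show ?case using elim by simp
      qed
    qed
    moreover have "Gfun \<mu> \<gamma> x t \<le> J"
      unfolding G J_def
    proof (rule integral_mono_AE[OF Gint Jint])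
      show "AE y in \<mu>. indicator {a..b} y * ((y - a) * exp (- t * y * (y - a) / 2)) \<le> (y - a) * exp (- t * y * (y - a) / 4)"
        using AEab
      proof eventually_elim
        case (elim y)
        have "0 \<le> t * y * (y - a)" using elim t by simp
        then have "- t * y * (y - a) / 2 \<le> - t * y * (y - a) / 4" by simp
        then have "(y - a) * exp (- t * y * (y - a) / 2) \<le> (y - a) * exp (- t * y * (y - a) / 4)"
          using elim by (intro mult_left_mono) auto
        then show ?case using elim by simp
      qed
    qed
    moreover have "max (Delta \<mu> x t) 0 = 0" using True D_def by simp
    ultimately show ?thesis using nonneg J_def by simp
  next
    case False
    define g where "g y = indicator {a + 2 * D..b} y * ((y - a) * exp (t * y * (2 * D + a - y) / 2))" for y
    have G: "Gfun \<mu> \<gamma> x t = 2 * D * x + (\<integral>y. g y \<partial>\<mu>)"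
      unfolding Gfun_def Let_def D_def[symmetric] sa bg g_def using False by (simp add: set_lebesgue_integral_def)
    have gint: "integrable \<mu> g"
      unfolding g_def using integrable_mult_indicator[of "{a + 2 * D..b}" \<mu>, OF _ fint] by simp
    have "risk_tol \<mu> x t - a * x \<le> (\<integral>y. 2 * D * exp (t * y * (2 * D + a - y) / 2) + g y \<partial>\<mu>)"
      unfolding r
    proof (rule integral_mono_AE[OF fint])
      show "integrable \<mu> (\<lambda>y. 2 * D * exp (t * y * (2 * D + a - y) / 2) + g y)"
        by (intro Bochner_Integration.integrable_add integrable_mult_right eint gint)
      show "AE y in \<mu>. (y - a) * exp (t * y * (2 * D + a - y) / 2) \<le> 2 * D * exp (t * y * (2 * D + a - y) / 2) + g y"
        using AEab
      proof eventually_elim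
        case (elim y)
        show ?case
        proof (cases "a + 2 * D \<le> y")
          case True then show ?thesis using elim False by (simp add: g_def)
        next
          case c: False
          then have "(y - a) * exp (t * y * (2 * D + a - y) / 2) \<le> 2 * D * exp (t * y * (2 * D + a - y) / 2)"
            by (intro mult_right_mono) auto
          then show ?thesis using c by (simp add: g_def)
        qed
      qed
    qed
    also have "\<dots> = 2 * D * x + (\<integral>y. g y \<partial>\<mu>)"
      using eint gint hx by (simp add: Bochner_Integration.integral_add)
    finally have up: "risk_tol \<mu> x t - a * x \<le> Gfun \<mu> \<gamma> x t" unfolding G .
    have "(\<integral>y. g y \<partial>\<mu>) \<le> (\<integral>y. 4 * D + (y - a) * exp (- t * y * (y - a) / 4) \<partial>\<mu>)"
    proof (rule integral_mono_AE[OF gint])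
      show "integrable \<mu> (\<lambda>y. 4 * D + (y - a) * exp (- t * y * (y - a) / 4))"
        by (intro Bochner_Integration.integrable_add Jint) simp
      show "AE y in \<mu>. g y \<le> 4 * D + (y - a) * exp (- t * y * (y - a) / 4)"
        using AEab
      proof eventually_elim
        case (elim y)
        have J0: "0 \<le> (y - a) * exp (- t * y * (y - a) / 4)" using elim by simp
        show ?case
        proof (cases "a + 2 * D \<le> y")
          case c: True
          show ?thesis
          proof (cases "a + 4 * D \<le> y")
            case True
            have "t * y * (2 * D + a - y) / 2 \<le> - t * y * (y - a) / 4"
            proof -
              have "2 * D + a - y \<le> - (y - a) / 2" using True by simp
              then have "t * y * (2 * D + a - y) \<le> t * y * (- (y - a) / 2)"
                using elim t by (intro mult_left_mono) auto
              then have "t * y * (2 * D + a - y) / 2 \<le> t * y * (- (y - a) / 2) / 2"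
                by (rule divide_right_mono) simp
              moreover have "t * y * (- (y - a) / 2) / 2 = - t * y * (y - a) / 4" by (simp add: algebra_simps)
              ultimately show ?thesis by linarith
            qed
            then have "(y - a) * exp (t * y * (2 * D + a - y) / 2) \<le> (y - a) * exp (- t * y * (y - a) / 4)"
              using elim by (intro mult_left_mono) auto
            moreover have "g y = (y - a) * exp (t * y * (2 * D + a - y) / 2)" using c elim by (simp add: g_def)
            ultimately show ?thesis using False by linarith
          next
            case c2: False
            have "t * y * (2 * D + a - y) \<le> 0" using c elim t by (intro mult_nonneg_nonpos) auto
            then have "exp (t * y * (2 * D + a - y) / 2) \<le> 1" by simp
            then have "(y - a) * exp (t * y * (2 * D + a - y) / 2) \<le> (y - a) * 1"
              using elim by (intro mult_left_mono) auto
            moreover have "g y = (y - a) * exp (t * y * (2 * D + a - y) / 2)" using c elim by (simp add: g_def)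
            ultimately show ?thesis using c2 J0 by (simp only: mult_1_right)
          qed
        next
          case c: False
          then show ?thesis using J0 False by (simp add: g_def)
        qed
      qed
    qed
    also have "\<dots> = 4 * D * M + J"
      using Jint by (simp add: Bochner_Integration.integral_add M_def J_def mult.commute)
    finally have "Gfun \<mu> \<gamma> x t \<le> 2 * D * x + (4 * D * M + J)" unfolding G by simp
    moreover have "max (Delta \<mu> x t) 0 = D" using False D_def by simp
    ultimately show ?thesis using nonneg up unfolding M_def J_def by (simp add: algebra_simps)
  qed
qed

lemma exp_lim: "(c::real) > 0 \<Longrightarrow> ((\<lambda>t. exp (- t * c / 4)) \<longlongrightarrow> 0) at_top"
  by real_asymp

lemma D_ev:
  assumes x: "0 < x" and sa: "supp_left \<mu> = a" and d: "0 < \<delta>"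
  shows "\<forall>\<^sub>F t in at_top. Delta \<mu> x t < \<delta>"
proof -
  obtain \<eta> where \<eta>: "\<eta> > 0" and c: "measure \<mu> {\<eta>..a+\<delta>} > 0" using mass[OF d] by auto
  define c where "c = measure \<mu> {\<eta>..a+\<delta>}"
  define L where "L = ln (x / c)"
  have "\<forall>\<^sub>F t in at_top. max 1 (2 * L / (\<eta> * \<delta>) + 1) \<le> t" by (rule eventually_ge_at_top)
  then show ?thesis
  proof eventually_elim
    case (elim t)
    then have t: "0 < t" by simp
    have tL: "L < t * \<eta> * \<delta> / 2"
    proof -
      have "(2 * L / (\<eta> * \<delta>) + 1) * (\<eta> * \<delta> / 2) \<le> t * (\<eta> * \<delta> / 2)"
        using elim \<eta> d by (intro mult_right_mono) auto
      moreover have "(2 * L / (\<eta> * \<delta>) + 1) * (\<eta> * \<delta> / 2) = L + \<eta> * \<delta> / 2"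
        using \<eta> d by (simp add: field_simps)
      moreover have "0 < \<eta> * \<delta> / 2" using \<eta> d by simp
      ultimately show ?thesis by (simp add: mult.assoc)
    qed
    show ?case
    proof (rule ccontr)
      assume "\<not> Delta \<mu> x t < \<delta>"
      then have Dd: "\<delta> \<le> Delta \<mu> x t" by simp
      define z where "z = hinv \<mu> x t"
      define D where "D = Delta \<mu> x t"
      have D: "D = z / t - a / 2" unfolding D_def Delta_def z_def sa ..
      have eqE: "y * z - y\<^sup>2 * t / 2 = t * y * (2 * D + a - y) / 2" for y
        using t unfolding D by (simp add: field_simps power2_eq_square)
      have "c * exp (t * \<eta> * \<delta> / 2) \<le> hfun \<mu> z t" unfolding c_def
      proof (rule h_lower, intro ballI)
        fix y assume y: "y \<in> {\<eta>..a+\<delta>}"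
        have "t * \<eta> * \<delta> \<le> t * y * (2 * D + a - y)"
          using y t \<eta> Dd D_def d by (intro mult_mono) auto
        then show "t * \<eta> * \<delta> / 2 \<le> y * z - y\<^sup>2 * t / 2" unfolding eqE by simp
      qed
      also have "\<dots> = x" unfolding z_def using hinv t x by simp
      finally have le: "c * exp (t * \<eta> * \<delta> / 2) \<le> x" .
      have "x / c < exp (t * \<eta> * \<delta> / 2)"
        using tL x c c_def unfolding L_def by (metis divide_pos_pos exp_less_cancel_iff exp_ln)
      then have "x < c * exp (t * \<eta> * \<delta> / 2)" using c c_def by (simp add: field_simps)
      then show False using le by simp
    qed
  qed
qed

lemma limits:
  assumes x: "0 < x" and sa: "supp_left \<mu> = a" and bg: "1 / (1 - \<gamma>) = b"
  shows "((\<lambda>t. risk_tol \<mu> x t / x) \<longlongrightarrow> supp_left \<mu>) at_top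
   \<and> ((\<lambda>t. Gfun \<mu> \<gamma> x t) \<longlongrightarrow> 0) at_top
   \<and> (\<forall>\<^sub>F t in at_top. 0 \<le> risk_tol \<mu> x t - supp_left \<mu> * x
                         \<and> risk_tol \<mu> x t - supp_left \<mu> * x \<le> Gfun \<mu> \<gamma> x t)"
proof -
  define M where "M = measure \<mu> (space \<mu>)"
  have kb: "\<forall>\<^sub>F t in at_top. 0 \<le> risk_tol \<mu> x t - a * x \<and> risk_tol \<mu> x t - a * x \<le> Gfun \<mu> \<gamma> x t
     \<and> Gfun \<mu> \<gamma> x t \<le> max (Delta \<mu> x t) 0 * (2 * x + 4 * M)
          + (\<integral>y. (y - a) * exp (- t * y * (y - a) / 4) \<partial>\<mu>)"
    using eventually_gt_at_top[of 0] by eventually_elim (use key_bounds x sa bg M_def in auto)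
  have mD: "((\<lambda>t. max (Delta \<mu> x t) 0) \<longlongrightarrow> 0) at_top"
  proof (rule order_tendstoI)
    fix e :: real assume "e < 0" then show "\<forall>\<^sub>F t in at_top. e < max (Delta \<mu> x t) 0" by (simp add: less_max_iff_disj)
  next
    fix e :: real assume e: "0 < e"
    show "\<forall>\<^sub>F t in at_top. max (Delta \<mu> x t) 0 < e"
      using D_ev[OF x sa e] by eventually_elim (use e in auto)
  qed
  have J: "((\<lambda>t. \<integral>y. (y - a) * exp (- t * y * (y - a) / 4) \<partial>\<mu>) \<longlongrightarrow> (\<integral>y. 0 \<partial>\<mu>)) at_top"
  proof (rule integral_dominated_convergence_at_top[where w="\<lambda>y. b - a"])
    show "(\<lambda>y. 0::real) \<in> borel_measurable \<mu>" by simp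
    show "(\<lambda>y. (y - a) * exp (- t * y * (y - a) / 4)) \<in> borel_measurable \<mu>" for t
      unfolding bm by measurable
    show "integrable \<mu> (\<lambda>y. b - a)" by simp
    show "AE y in \<mu>. ((\<lambda>t. (y - a) * exp (- t * y * (y - a) / 4)) \<longlongrightarrow> 0) at_top"
      using AEab
    proof eventually_elim
      case (elim y)
      show ?case
      proof (cases "y = a")
        case True then show ?thesis by simp
      next
        case False
        then have "0 < y * (y - a)" using elim by simp
        then have "((\<lambda>t. exp (- t * (y * (y - a)) / 4)) \<longlongrightarrow> 0) at_top" by (rule exp_lim)
        then have "((\<lambda>t. (y - a) * exp (- t * (y * (y - a)) / 4)) \<longlongrightarrow> (y - a) * 0) at_top"
          by (rule tendsto_mult_left)
        then show ?thesis by (simp add: mult.assoc)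
      qed
    qed
    show "\<forall>\<^sub>F t in at_top. AE y in \<mu>. norm ((y - a) * exp (- t * y * (y - a) / 4)) \<le> b - a"
      using eventually_ge_at_top[of 0]
    proof eventually_elim
      case (elim t)
      show ?case using AEab
      proof eventually_elim
        case (elim y)
        have "0 \<le> t * y * (y - a) / 4" using elim \<open>0 \<le> t\<close> by simp
        then have "exp (- t * y * (y - a) / 4) \<le> 1" by simp
        then have "(y - a) * exp (- t * y * (y - a) / 4) \<le> (y - a) * 1" using elim by (intro mult_left_mono) auto
        then show ?case using elim by simp
      qed
    qed
  qed
  have bound0: "((\<lambda>t. max (Delta \<mu> x t) 0 * (2 * x + 4 * M)
          + (\<integral>y. (y - a) * exp (- t * y * (y - a) / 4) \<partial>\<mu>)) \<longlongrightarrow> 0 * (2 * x + 4 * M) + 0) at_top"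
    using J by (intro tendsto_add tendsto_mult mD tendsto_const) simp
  have G: "((\<lambda>t. Gfun \<mu> \<gamma> x t) \<longlongrightarrow> 0) at_top"
  proof (rule tendsto_sandwich[OF _ _ tendsto_const])
    show "\<forall>\<^sub>F t in at_top. 0 \<le> Gfun \<mu> \<gamma> x t" using kb by eventually_elim auto
    show "\<forall>\<^sub>F t in at_top. Gfun \<mu> \<gamma> x t \<le> max (Delta \<mu> x t) 0 * (2 * x + 4 * M)
          + (\<integral>y. (y - a) * exp (- t * y * (y - a) / 4) \<partial>\<mu>)" using kb by eventually_elim auto
    show "((\<lambda>t. max (Delta \<mu> x t) 0 * (2 * x + 4 * M)
          + (\<integral>y. (y - a) * exp (- t * y * (y - a) / 4) \<partial>\<mu>)) \<longlongrightarrow> 0) at_top"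
      using bound0 by simp
  qed
  have R: "((\<lambda>t. risk_tol \<mu> x t / x) \<longlongrightarrow> a) at_top"
  proof (rule tendsto_sandwich[OF _ _ tendsto_const])
    show "\<forall>\<^sub>F t in at_top. a \<le> risk_tol \<mu> x t / x" using kb
      by eventually_elim (use x in \<open>auto simp: field_simps\<close>)
    show "\<forall>\<^sub>F t in at_top. risk_tol \<mu> x t / x \<le> a + Gfun \<mu> \<gamma> x t / x" using kb
      by eventually_elim (use x in \<open>auto simp: field_simps\<close>)
    show "((\<lambda>t. a + Gfun \<mu> \<gamma> x t / x) \<longlongrightarrow> a) at_top"
      using tendsto_add[OF tendsto_const[of a] tendsto_divide[OF G tendsto_const[of x]]] x by simp
  qed
  show ?thesis using R G kb unfolding sa by (auto elim: eventually_mono)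
qed

end

lemma null_AE:
  assumes "sets \<mu> = sets borel" "A \<in> sets borel" "emeasure \<mu> A = 0"
  shows "AE y in \<mu>. y \<notin> A"
proof -
  have "A \<in> sets \<mu>" using assms by simp
  then have "A \<in> null_sets \<mu>" using assms(3) by auto
  then show ?thesis using AE_iff_null_sets \<open>A \<in> sets \<mu>\<close> by blast
qed

theorem theorem9:
  fixes \<mu> :: "real measure" and \<gamma> :: real
  assumes sets_mu: "sets \<mu> = sets borel"
    and finite_mu: "finite_measure \<mu>"
    and supp_pos: "emeasure \<mu> {..0} = 0"
    and nonzero: "emeasure \<mu> (space \<mu>) \<noteq> 0"
    and integr: "\<And>z. integrable \<mu> (\<lambda>y. y * exp (y * z))"
    and gamma: "\<gamma> < 1"
    and right_end: "supp_right \<mu> = ereal (1 / (1 - \<gamma>))"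
  shows "\<forall>x0>0.
     ((\<lambda>t. risk_tol \<mu> x0 t / x0) \<longlongrightarrow> supp_left \<mu>) at_top
   \<and> ((\<lambda>t. Gfun \<mu> \<gamma> x0 t) \<longlongrightarrow> 0) at_top
   \<and> (\<forall>\<^sub>F t in at_top. 0 \<le> risk_tol \<mu> x0 t - supp_left \<mu> * x0
                         \<and> risk_tol \<mu> x0 t - supp_left \<mu> * x0 \<le> Gfun \<mu> \<gamma> x0 t)"
proof -
  interpret finite_measure \<mu> by (rule finite_mu)
  define a where "a = supp_left \<mu>"
  define b where "b = 1 / (1 - \<gamma>)"
  define S where "S = {y. 0 \<le> y \<and> measure \<mu> {0<..y} > 0}"
  have a_S: "a = Inf S" unfolding a_def S_def supp_left_def ..
  have b0: "0 < b" unfolding b_def using gamma by simp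
  have AEF: "\<not> (AE y in \<mu>. False)"
    using ae_filter_eq_bot_iff[of \<mu>] trivial_limit_def nonzero by metis
  have pos: "AE y in \<mu>. 0 < y"
    using null_AE[OF sets_mu _ supp_pos] by (auto elim: eventually_mono)
  have AEb: "AE y in \<mu>. y \<le> b"
  proof -
    have "AE y in \<mu>. y \<notin> {b + 1 / Suc n<..}" for n
    proof -
      have "supp_right \<mu> < ereal (b + 1 / Suc n)" using right_end b_def by simp
      then obtain y where y: "0 < y" "emeasure \<mu> {y<..} = 0" "ereal y < ereal (b + 1 / Suc n)"
        unfolding supp_right_def Inf_less_iff by auto
      have "emeasure \<mu> {b + 1 / Suc n<..} \<le> emeasure \<mu> {y<..}"
        using y(3) sets_mu by (intro emeasure_mono) auto
      then have "emeasure \<mu> {b + 1 / Suc n<..} = 0" using y(2) by simp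
      then show ?thesis using null_AE[OF sets_mu, of "{b + 1 / Suc n<..}"] by (auto elim: eventually_mono)
    qed
    then have "AE y in \<mu>. \<forall>n. y \<notin> {b + 1 / Suc n<..}" by (simp add: AE_all_countable)
    then show ?thesis
    proof (rule eventually_mono)
      fix y assume h: "\<forall>n. y \<notin> {b + 1 / Suc n<..}"
      show "y \<le> b"
      proof (rule ccontr)
        assume "\<not> y \<le> b"
        then obtain n where "inverse (real (Suc n)) < y - b" using reals_Archimedean[of "y - b"] by auto
        then show False using h[rule_format, of n] by (simp add: field_simps)
      qed
    qed
  qed
  have bS: "b \<in> S"
  proof -
    have "measure \<mu> {0<..b} > 0"
    proof (rule ccontr)
      assume "\<not> measure \<mu> {0<..b} > 0"
      then have "measure \<mu> {0<..b} = 0" using measure_nonneg[of \<mu> "{0<..b}"] by linarith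
      then have "emeasure \<mu> {0<..b} = 0" using emeasure_eq_measure[of "{0<..b}"] by simp
      then have "AE y in \<mu>. y \<notin> {0<..b}" using null_AE[OF sets_mu, of "{0<..b}"] by auto
      then have "AE y in \<mu>. False" using pos AEb by eventually_elim auto
      then show False using AEF by simp
    qed
    then show ?thesis unfolding S_def using b0 by simp
  qed
  have Sne: "S \<noteq> {}" using bS by auto
  have Sbdd: "bdd_below S" unfolding S_def by (rule bdd_belowI[of _ 0]) auto
  have a0: "0 \<le> a" unfolding a_S using Sne by (intro cInf_greatest) (auto simp: S_def)
  have AEa: "AE y in \<mu>. a \<le> y"
  proof -
    have "AE y in \<mu>. \<not> (0 < y \<and> y \<le> a - 1 / Suc n)" for n
    proof (cases "a - 1 / Suc n < 0")
      case True then show ?thesis by (intro AE_I2) auto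
    next
      case False
      have "a - 1 / Suc n \<notin> S"
      proof
        assume "a - 1 / Suc n \<in> S"
        then have "a \<le> a - 1 / Suc n" unfolding a_S using Sbdd by (rule cInf_lower)
        then show False by simp
      qed
      then have "\<not> measure \<mu> {0<..a - 1 / Suc n} > 0" using False unfolding S_def by simp
      then have "measure \<mu> {0<..a - 1 / Suc n} = 0" using measure_nonneg[of \<mu> "{0<..a - 1 / Suc n}"]
        by linarith
      then have "emeasure \<mu> {0<..a - 1 / Suc n} = 0" using emeasure_eq_measure[of "{0<..a - 1 / Suc n}"] by simp
      then show ?thesis using null_AE[OF sets_mu, of "{0<..a - 1 / Suc n}"] by (auto elim: eventually_mono)
    qed
    then have "AE y in \<mu>. \<forall>n. \<not> (0 < y \<and> y \<le> a - 1 / Suc n)" unfolding AE_all_countable by blast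
    then show ?thesis using pos
    proof eventually_elim
      case (elim y)
      show "a \<le> y"
      proof (rule ccontr)
        assume "\<not> a \<le> y"
        then obtain n where "inverse (real (Suc n)) < a - y" using reals_Archimedean[of "a - y"] by auto
        then show False using elim(1)[rule_format, of n] elim(2) by (simp add: field_simps)
      qed
    qed
  qed
  have mass: "\<exists>\<eta>>0. measure \<mu> {\<eta>..a+\<delta>} > 0" if d: "\<delta> > 0" for \<delta>
  proof (rule ccontr)
    assume nm: "\<not> (\<exists>\<eta>>0. measure \<mu> {\<eta>..a+\<delta>} > 0)"
    have "Inf S < a + \<delta>" using a_S d by simp
    then obtain s where s: "s \<in> S" "s < a + \<delta>" using cInf_less_iff[OF Sne Sbdd] by auto
    have "AE y in \<mu>. y \<notin> {1 / Suc n..s}" for n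
    proof -
      have "measure \<mu> {1 / Suc n..s} \<le> measure \<mu> {1 / Suc n..a+\<delta>}"
        using s sets_mu by (intro finite_measure_mono) auto
      moreover have "\<not> measure \<mu> {1 / Suc n..a+\<delta>} > 0" using nm by simp
      ultimately have "measure \<mu> {1 / Suc n..s} = 0" using measure_nonneg[of \<mu> "{1 / Suc n..s}"] by linarith
      then have "emeasure \<mu> {1 / Suc n..s} = 0" using emeasure_eq_measure[of "{1 / Suc n..s}"] by simp
      then show ?thesis using null_AE[OF sets_mu, of "{1 / Suc n..s}"] by (auto elim: eventually_mono)
    qed
    then have "AE y in \<mu>. \<forall>n. y \<notin> {1 / Suc n..s}" unfolding AE_all_countable by blast
    then have "AE y in \<mu>. y \<notin> {0<..s}"
    proof (rule eventually_mono)
      fix y assume h: "\<forall>n. y \<notin> {1 / Suc n..s}"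
      show "y \<notin> {0<..s}"
      proof
        assume y: "y \<in> {0<..s}"
        then obtain n where "inverse (real (Suc n)) < y" using reals_Archimedean[of y] by auto
        then show False using h[rule_format, of n] y by (simp add: field_simps)
      qed
    qed
    then have "{0<..s} \<in> null_sets \<mu>" using AE_iff_null_sets[of "{0<..s}" \<mu>] sets_mu by simp
    then have "measure \<mu> {0<..s} = 0" by (simp add: measure_def null_setsD1)
    then show False using s(1) unfolding S_def by simp
  qed
  have AEab: "AE y in \<mu>. 0 < y \<and> a \<le> y \<and> y \<le> b" using pos AEa AEb by eventually_elim auto
  interpret S \<mu> a b
    by unfold_locales (use sets_mu finite_mu AEab a0 nonzero mass in auto)
  show ?thesis using limits a_def b_def by auto
qed

end
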